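(* Let $S\subset\mathbb{R}^2$, $\alpha>0$, and let $V$ be a unit intensity Poisson process on $\mathbb{R}^2$. Condition on the points of $V\cap(\partial S)^\alpha$. On the event that $S$ is $\alpha$-sealed with respect to $V$, the Voronoi map of $V$ in $S^{-\alpha}$ is determined by the process $V\cap S^\alpha$. Moreover, for every $x\in V\cap S^{-\alpha}$, the Voronoi cell of $x$, as well as all (centers of) neighbors of $x$ in the Delaunay graph, are contained in $S^\alpha$.
   Context: A set $S\subset\mathbb{R}^2$ is $\alpha$-sealed w.r.t. $V$ if $d(x,V)\le\alpha$ for every $x\in\partial S$. For a set $U$, $U^\alpha=\{x\in\mathbb{R}^2: d(x,U)\le\alpha\}$, and $S^{-\alpha}$ is the set of points at distance at least $\alpha$ from the complement $S^c$. The Voronoi cell of $x\in V$ is $C(x)=\{z: d(z,x)=d(z,V)\}$; the Delaunay graph has vertex set $V$ and an edge $(x,y)$ iff $|C(x)\cap C(y)|>1$. *)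

theory Defs
  imports "HOL-Probability.Probability"
begin

type_synonym pt = "real^2"

text \<open>Closed alpha-neighbourhood U^alpha = {x. d(x,U) <= alpha}; empty if U is empty
  (d(x,{}) = +infinity).\<close>
definition thicken :: "real \<Rightarrow> pt set \<Rightarrow> pt set" where
  "thicken \<alpha> U = {x. U \<noteq> {} \<and> infdist x U \<le> \<alpha>}"

definition inner_set :: "real \<Rightarrow> pt set \<Rightarrow> pt set" where
  "inner_set \<alpha> S = {x. \<forall>y. y \<notin> S \<longrightarrow> \<alpha> \<le> dist x y}"

definition sealed :: "real \<Rightarrow> pt set \<Rightarrow> pt set \<Rightarrow> bool" where
  "sealed \<alpha> S V \<longleftrightarrow> (\<forall>x\<in>frontier S. V \<noteq> {} \<and> infdist x V \<le> \<alpha>)"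

definition voronoi_cell :: "pt set \<Rightarrow> pt \<Rightarrow> pt set" where
  "voronoi_cell V x = {z. dist z x = infdist z V}"

definition voronoi_map :: "pt set \<Rightarrow> pt \<Rightarrow> pt set" where
  "voronoi_map V z = {x \<in> V. z \<in> voronoi_cell V x}"

definition delaunay_edge :: "pt set \<Rightarrow> pt \<Rightarrow> pt \<Rightarrow> bool" where
  "delaunay_edge V x y \<longleftrightarrow> x \<in> V \<and> y \<in> V \<and>
     (\<exists>a b. a \<noteq> b \<and> a \<in> voronoi_cell V x \<inter> voronoi_cell V y \<and> b \<in> voronoi_cell V x \<inter> voronoi_cell V y)"

definition poisson_process :: "'a measure \<Rightarrow> ('a \<Rightarrow> pt set) \<Rightarrow> bool" where
  "poisson_process M V \<longleftrightarrow> prob_space M \<and>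
     (\<forall>\<omega>\<in>space M. \<forall>K. bounded K \<longrightarrow> finite (V \<omega> \<inter> K)) \<and>
     (\<forall>A. A \<in> sets lborel \<and> bounded A \<longrightarrow>
        (\<lambda>\<omega>. card (V \<omega> \<inter> A)) \<in> measurable M (count_space UNIV) \<and>
        (\<forall>k::nat. measure M {\<omega>\<in>space M. card (V \<omega> \<inter> A) = k} =
            (measure lborel A) ^ k / fact k * exp (- measure lborel A))) \<and>
     (\<forall>(As :: nat \<Rightarrow> pt set) n. (\<forall>i<n. As i \<in> sets lborel \<and> bounded (As i)) \<and>
         disjoint_family_on As {..<n} \<longrightarrow>
        prob_space.indep_vars M (\<lambda>_. count_space UNIV) (\<lambda>i \<omega>. card (V \<omega> \<inter> As i)) {..<n})"

end

theory Submission imports Defs "HOL-Analysis.Analysis" begin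

lemma attain:
  fixes V :: "pt set"
  assumes lf: "\<And>K. bounded K \<Longrightarrow> finite (V \<inter> K)" and ne: "V \<noteq> {}"
  obtains v where "v \<in> V" "infdist w V = dist w v"
proof -
  obtain v0 where v0: "v0 \<in> V" using ne by auto
  let ?F = "V \<inter> cball w (dist w v0)"
  have fF: "finite ?F" using lf by simp
  have Fne: "?F \<noteq> {}" using v0 by auto
  obtain v where v: "v \<in> ?F" "\<And>y. y \<in> ?F \<Longrightarrow> dist w v \<le> dist w y"
    using distance_attains_inf[OF finite_imp_closed[OF fF] Fne] by blast
  have "infdist w V = dist w v"
  proof (rule antisym)
    show "infdist w V \<le> dist w v" using v(1) by (simp add: infdist_le)
    show "dist w v \<le> infdist w V"
      unfolding infdist_notempty[OF ne]
    proof (rule cINF_greatest[OF ne])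
      fix y assume "y \<in> V"
      show "dist w v \<le> dist w y"
      proof (cases "y \<in> cball w (dist w v0)")
        case True then show ?thesis using v \<open>y \<in> V\<close> by auto
      next
        case False then show ?thesis using v(1) by auto
      qed
    qed
  qed
  then show ?thesis using v(1) that by auto
qed

lemma closure_infdist_le:
  assumes "w \<in> closure A" shows "infdist x A \<le> dist x w"
proof -
  have "A \<noteq> {}" using assms by auto
  then have "infdist w A = 0" using assms in_closure_iff_infdist_zero by blast
  then show ?thesis using infdist_triangle[of x A w] by simp
qed

lemma cross:
  fixes z v :: pt
  assumes "z \<in> S" "v \<notin> S"
  obtains w where "w \<in> frontier S" "dist z v = dist z w + dist w v"
proof -
  have "closed_segment z v \<inter> frontier S \<noteq> {}"
    by (rule connected_Int_frontier) (use assms in auto)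
  then obtain w where w: "w \<in> closed_segment z v" "w \<in> frontier S" by auto
  then have "between (z,v) w" by (simp add: between_mem_segment)
  then have "dist z v = dist z w + dist w v" by (simp add: between)
  then show ?thesis using that w by blast
qed


lemma S_sub_T: "S \<subseteq> thicken \<alpha> S" if "\<alpha> \<ge> 0" for S
  using that by (auto simp: thicken_def)

lemma key:
  fixes V :: "pt set"
  assumes lf: "\<And>K. bounded K \<Longrightarrow> finite (V \<inter> K)"
    and seal: "sealed \<alpha> S V" and a0: "\<alpha> > 0" and z: "z \<in> S" and v: "v \<in> V" "v \<notin> thicken \<alpha> S"
  obtains v' where "v' \<in> V" "v' \<in> thicken \<alpha> S" "dist z v' < dist z v"
proof -
  have Sne: "S \<noteq> {}" using z by auto
  have big: "infdist v S > \<alpha>" using v Sne by (auto simp: thicken_def)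
  have vS: "v \<notin> S"
  proof
    assume "v \<in> S" then have "infdist v S = 0" by simp
    then show False using big a0 by simp
  qed
  obtain w where w: "w \<in> frontier S" "dist z v = dist z w + dist w v" using cross[OF z vS] by blast
  have wcl: "w \<in> closure S" using w(1) by (simp add: frontier_def)
  have "infdist v S \<le> dist v w" by (rule closure_infdist_le[OF wcl])
  then have dwv: "dist w v > \<alpha>" using big by (simp add: dist_commute)
  have Vne: "V \<noteq> {}" and wV: "infdist w V \<le> \<alpha>" using seal w(1) by (auto simp: sealed_def)
  obtain v' where v': "v' \<in> V" "infdist w V = dist w v'" using attain[OF lf Vne] by blast
  have "infdist v' S \<le> dist v' w" by (rule closure_infdist_le[OF wcl])
  then have "v' \<in> thicken \<alpha> S" using Sne wV v' by (auto simp: thicken_def dist_commute)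
  moreover have "dist z v' < dist z v"
    using dist_triangle[of z v' w] w(2) dwv wV v' by linarith
  ultimately show ?thesis using that v' by blast
qed

lemma claim1:
  fixes V :: "pt set"
  assumes lf: "\<And>K. bounded K \<Longrightarrow> finite (V \<inter> K)"
    and seal: "sealed \<alpha> S V" and a0: "\<alpha> > 0" and z: "z \<in> S"
  shows "voronoi_map V z = voronoi_map (V \<inter> thicken \<alpha> S) z"
proof
  let ?T = "thicken \<alpha> S"
  show "voronoi_map V z \<subseteq> voronoi_map (V \<inter> ?T) z"
  proof
    fix x assume "x \<in> voronoi_map V z"
    then have x: "x \<in> V" "dist z x = infdist z V" by (auto simp: voronoi_map_def voronoi_cell_def)
    have xT: "x \<in> ?T"
    proof (rule ccontr)
      assume "x \<notin> ?T"
      then obtain v' where "v' \<in> V" "dist z v' < dist z x" using key[OF lf seal a0 z x(1)] by blast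
      then show False using x(2) infdist_le[of v' V z] by linarith
    qed
    have "infdist z (V \<inter> ?T) \<le> dist z x" by (metis IntI infdist_le x(1) xT)
    moreover have "infdist z V \<le> infdist z (V \<inter> ?T)"
      by (rule infdist_mono) (use x xT in auto)
    ultimately have "dist z x = infdist z (V \<inter> ?T)" using x by linarith
    then show "x \<in> voronoi_map (V \<inter> ?T) z" using x xT by (auto simp: voronoi_map_def voronoi_cell_def)
  qed
  show "voronoi_map (V \<inter> ?T) z \<subseteq> voronoi_map V z"
  proof
    fix x assume "x \<in> voronoi_map (V \<inter> ?T) z"
    then have x: "x \<in> V" "x \<in> ?T" "dist z x = infdist z (V \<inter> ?T)"
      by (auto simp: voronoi_map_def voronoi_cell_def)
    have Vne: "V \<noteq> {}" using x by auto
    have "dist z x \<le> infdist z V"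
      unfolding infdist_notempty[OF Vne]
    proof (rule cINF_greatest[OF Vne])
      fix v assume v: "v \<in> V"
      show "dist z x \<le> dist z v"
      proof (cases "v \<in> ?T")
        case True then show ?thesis using x v infdist_le[of v "V \<inter> ?T" z] by auto
      next
        case False
        then obtain v' where "v' \<in> V" "v' \<in> ?T" "dist z v' < dist z v" using key[OF lf seal a0 z v] by blast
        then show ?thesis using x infdist_le[of v' "V \<inter> ?T" z] by auto
      qed
    qed
    moreover have "infdist z V \<le> dist z x" using x(1) by (rule infdist_le)
    ultimately show "x \<in> voronoi_map V z" using x by (auto simp: voronoi_map_def voronoi_cell_def)
  qed
qed

lemma inner_in: "x \<in> inner_set \<alpha> S \<Longrightarrow> \<alpha> > 0 \<Longrightarrow> x \<in> S"
  by (auto simp: inner_set_def)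

lemma cellS:
  fixes V :: "pt set"
  assumes lf: "\<And>K. bounded K \<Longrightarrow> finite (V \<inter> K)"
    and seal: "sealed \<alpha> S V" and a0: "\<alpha> > 0" and x: "x \<in> V" "x \<in> inner_set \<alpha> S"
    and nd: "\<forall>w\<in>frontier S. dist x w \<noteq> \<alpha>"
    and a: "a \<in> voronoi_cell V x"
  shows "a \<in> S"
proof (rule ccontr)
  assume aS: "a \<notin> S"
  have xS: "x \<in> S" using inner_in x a0 by blast
  obtain w where w: "w \<in> frontier S" "dist x a = dist x w + dist w a" using cross[OF xS aS] by blast
  have wcl: "w \<in> closure (- S)" using w(1) by (simp add: frontier_def closure_complement)
  have "\<alpha> \<le> infdist x (- S)"
  proof -
    have ne: "- S \<noteq> {}" using aS by auto
    show ?thesis unfolding infdist_notempty[OF ne]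
      by (rule cINF_greatest[OF ne]) (use x(2) in \<open>auto simp: inner_set_def\<close>)
  qed
  also have "\<dots> \<le> dist x w" by (rule closure_infdist_le[OF wcl])
  finally have "dist x w > \<alpha>" using nd w(1) by force
  have Vne: "V \<noteq> {}" and wV: "infdist w V \<le> \<alpha>" using seal w(1) by (auto simp: sealed_def)
  obtain v' where v': "v' \<in> V" "infdist w V = dist w v'" using attain[OF lf Vne] by blast
  have "dist a x = infdist a V" using a by (simp add: voronoi_cell_def)
  also have "\<dots> \<le> dist a v'" using v' by (simp add: infdist_le)
  also have "\<dots> \<le> dist a w + dist w v'" by (rule dist_triangle)
  finally show False using w(2) \<open>dist x w > \<alpha>\<close> wV v' by (simp add: dist_commute)
qed

lemma determ:
  fixes V :: "pt set"
  assumes lf: "\<And>K. bounded K \<Longrightarrow> finite (V \<inter> K)"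
    and seal: "sealed \<alpha> S V" and a0: "\<alpha> > 0"
    and nd: "\<forall>x\<in>V. x \<in> inner_set \<alpha> S \<longrightarrow> (\<forall>w\<in>frontier S. dist x w \<noteq> \<alpha>)"
  shows "(\<forall>z\<in>inner_set \<alpha> S. voronoi_map V z = voronoi_map (V \<inter> thicken \<alpha> S) z) \<and>
            (\<forall>x\<in>V \<inter> inner_set \<alpha> S.
                voronoi_cell V x \<subseteq> thicken \<alpha> S \<and>
                (\<forall>y. delaunay_edge V x y \<longrightarrow> y \<in> thicken \<alpha> S))"
proof (intro conjI ballI allI impI subsetI)
  fix z assume "z \<in> inner_set \<alpha> S"
  then show "voronoi_map V z = voronoi_map (V \<inter> thicken \<alpha> S) z"
    using claim1[OF lf seal a0] inner_in a0 by blast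
next
  fix x a assume x: "x \<in> V \<inter> inner_set \<alpha> S" and a: "a \<in> voronoi_cell V x"
  then have "a \<in> S" using cellS[OF lf seal a0] nd by blast
  then show "a \<in> thicken \<alpha> S" using S_sub_T[of \<alpha> S] a0 by auto
next
  fix x y assume x: "x \<in> V \<inter> inner_set \<alpha> S" and e: "delaunay_edge V x y"
  then obtain a where a: "a \<in> voronoi_cell V x" "a \<in> voronoi_cell V y" and y: "y \<in> V"
    by (auto simp: delaunay_edge_def)
  have aS: "a \<in> S" using cellS[OF lf seal a0 _ _ _ a(1)] nd x by blast
  show "y \<in> thicken \<alpha> S"
  proof (rule ccontr)
    assume "y \<notin> thicken \<alpha> S"
    then obtain v' where "v' \<in> V" "dist a v' < dist a y" using key[OF lf seal a0 aS y] by blast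
    then show False using a(2) infdist_le[of v' V a] by (simp add: voronoi_cell_def)
  qed
qed


lemma real_cone:
  fixes a b p q \<alpha> :: real
  assumes "\<alpha> > 0" "a \<ge> 0" "p \<ge> \<alpha>/2" "q^2 \<le> \<alpha>^2" "a^2 + b^2 < \<alpha>^2/4"
    "2*(a*p + b*q) \<le> a^2 + b^2"
  shows "a \<le> 5*\<bar>b\<bar>"
proof -
  have qa: "\<bar>q\<bar> \<le> \<alpha>" using abs_le_square_iff[of q \<alpha>] assms(1,4) by simp
  have q4: "(\<alpha>/2)^2 = \<alpha>^2/4" by (simp add: power_divide)
  have s1: "a^2 < (\<alpha>/2)^2" using assms(5) q4 zero_le_power2[of b] by linarith
  have s2: "\<bar>b\<bar>^2 < (\<alpha>/2)^2" using assms(5) q4 zero_le_power2[of a] by (simp only: power2_abs)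
  have aa: "a < \<alpha>/2" using power_less_imp_less_base[OF s1] assms(1) by simp
  have ba: "\<bar>b\<bar> < \<alpha>/2" using power_less_imp_less_base[OF s2] assms(1) by simp
  have "a*p \<ge> a*(\<alpha>/2)" using mult_left_mono[of "\<alpha>/2" p a] assms(2,3) by simp
  moreover have "b*q \<ge> -(\<bar>b\<bar>*\<alpha>)"
  proof -
    have "\<bar>b*q\<bar> \<le> \<bar>b\<bar>*\<alpha>" using qa by (simp add: abs_mult mult_left_mono)
    then show ?thesis by linarith
  qed
  moreover have "a^2 \<le> a*(\<alpha>/2)" using mult_left_mono[of a "\<alpha>/2" a] aa assms(2) by (simp add: power2_eq_square)
  moreover have "b^2 \<le> \<bar>b\<bar>*(\<alpha>/2)" using ba
    by (metis abs_ge_zero abs_mult_self_eq mult_left_mono power2_eq_square less_imp_le)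
  ultimately have "a*\<alpha> \<le> 5*(\<bar>b\<bar>*\<alpha>)" using assms(6) by (simp add: field_simps)
  then show ?thesis using assms(1) by simp
qed


definition Lset :: "pt set \<Rightarrow> real \<Rightarrow> pt set" where
  "Lset K \<alpha> = {x. infdist x K = \<alpha>}"

definition Lpiece :: "pt set \<Rightarrow> real \<Rightarrow> pt \<Rightarrow> pt set" where
  "Lpiece K \<alpha> e = {x. infdist x K = \<alpha> \<and> (\<exists>w\<in>K. dist x w = \<alpha> \<and> (w - x) \<bullet> e \<ge> \<alpha>/2)}"

lemma cone1:
  fixes e e' :: pt
  assumes dec: "\<And>v u. v \<bullet> u = (v \<bullet> e) * (u \<bullet> e) + (v \<bullet> e') * (u \<bullet> e')"
    and a0: "\<alpha> > 0"
    and x: "x \<in> Lpiece K \<alpha> e" and y: "infdist y K = \<alpha>"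
    and close: "norm (y - x) < \<alpha>/2" and pos: "(y - x) \<bullet> e \<ge> 0"
  shows "(y - x) \<bullet> e \<le> 5 * \<bar>(y - x) \<bullet> e'\<bar>"
proof -
  obtain w where w: "w \<in> K" "dist x w = \<alpha>" "(w - x) \<bullet> e \<ge> \<alpha>/2"
    using x by (auto simp: Lpiece_def)
  define v where "v = y - x"
  define u where "u = w - x"
  have uu: "u \<bullet> u = \<alpha>^2" using w(2) by (simp add: u_def dist_norm power2_norm_eq_inner[symmetric] norm_minus_commute)
  have "\<alpha> \<le> dist y w" using y w(1) infdist_le by metis
  then have "\<alpha>^2 \<le> (v - u) \<bullet> (v - u)" using a0
    by (simp add: v_def u_def dist_norm power2_norm_eq_inner[symmetric] power_mono)
  also have "\<dots> = v \<bullet> v - 2 * (v \<bullet> u) + u \<bullet> u" by (simp add: algebra_simps inner_commute)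
  finally have ineq: "2 * (v \<bullet> u) \<le> v \<bullet> v" using uu by simp
  have vv: "v \<bullet> v < \<alpha>^2/4"
  proof -
    have "norm v ^2 < (\<alpha>/2)^2" using close by (simp add: v_def power_strict_mono)
    then show ?thesis by (simp add: power2_norm_eq_inner power_divide)
  qed
  have q: "(u \<bullet> e')^2 \<le> \<alpha>^2" using dec[of u u] uu by (simp add: power2_eq_square)
  show ?thesis
    using real_cone[OF a0, of "v \<bullet> e" "u \<bullet> e" "u \<bullet> e'" "v \<bullet> e'"] pos w(3) q vv ineq dec[of v v] dec[of v u]
    by (simp add: v_def u_def power2_eq_square)
qed

lemma cone2:
  fixes e e' :: pt
  assumes dec: "\<And>v u. v \<bullet> u = (v \<bullet> e) * (u \<bullet> e) + (v \<bullet> e') * (u \<bullet> e')"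
    and a0: "\<alpha> > 0"
    and x: "x \<in> Lpiece K \<alpha> e" and y: "y \<in> Lpiece K \<alpha> e"
    and close: "norm (y - x) < \<alpha>/2"
  shows "\<bar>(y - x) \<bullet> e\<bar> \<le> 5 * \<bar>(y - x) \<bullet> e'\<bar>"
proof (cases "(y - x) \<bullet> e \<ge> 0")
  case True
  have "infdist y K = \<alpha>" using y by (simp add: Lpiece_def)
  then show ?thesis using cone1[OF dec a0 x _ close True] True by simp
next
  case False
  have "infdist x K = \<alpha>" using x by (simp add: Lpiece_def)
  moreover have "norm (x - y) < \<alpha>/2" using close by (simp add: norm_minus_commute)
  moreover have "(x - y) \<bullet> e \<ge> 0" using False by (simp add: inner_diff_left)
  ultimately have "(x - y) \<bullet> e \<le> 5 * \<bar>(x - y) \<bullet> e'\<bar>" using cone1[OF dec a0 y] by blast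
  then show ?thesis using False by (simp add: inner_diff_left abs_minus_commute)
qed


lemma neg_piece:
  fixes e e' :: pt
  assumes dec: "\<And>v u. v \<bullet> u = (v \<bullet> e) * (u \<bullet> e) + (v \<bullet> e') * (u \<bullet> e')"
    and a0: "\<alpha> > 0" and orth: "e \<bullet> e' = 0" and enz: "e \<noteq> 0" and e1: "e' \<bullet> e' = 1"
  shows "negligible (Lpiece K \<alpha> e)"
proof (rule locally_negligible_alt[THEN iffD2], rule ballI)
  fix x0 assume "x0 \<in> Lpiece K \<alpha> e"
  define U where "U = Lpiece K \<alpha> e \<inter> ball x0 (\<alpha>/4)"
  define pr where "pr = (\<lambda>v::pt. (v \<bullet> e') *\<^sub>R e')"
  have opU: "openin (top_of_set (Lpiece K \<alpha> e)) U" unfolding U_def by (simp add: openin_open_Int)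
  have x0U: "x0 \<in> U" using \<open>x0 \<in> _\<close> a0 by (simp add: U_def)
  have cl: "norm (y - x) < \<alpha>/2" if "x \<in> U" "y \<in> U" for x y
  proof -
    have "dist x0 x < \<alpha>/4" "dist x0 y < \<alpha>/4" using that by (auto simp: U_def)
    then have "dist x y < \<alpha>/2" using dist_triangle[of x y x0] by (simp add: dist_commute)
    then show ?thesis by (simp add: dist_norm norm_minus_commute)
  qed
  have cone: "\<bar>(y - x) \<bullet> e\<bar> \<le> 5 * \<bar>(y - x) \<bullet> e'\<bar>" if "x \<in> U" "y \<in> U" for x y
    using cone2[OF dec a0 _ _ cl[OF that]] that by (auto simp: U_def)
  have pie: "pr v \<bullet> e' = v \<bullet> e'" for v by (simp add: pr_def e1)
  have lip: "norm (y - x) \<le> 6 * norm (pr y - pr x)" if "x \<in> U" "y \<in> U" for x y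
  proof -
    define c where "c = (y - x) \<bullet> e'"
    have "pr y - pr x = c *\<^sub>R e'" by (simp add: pr_def c_def inner_diff_left scaleR_diff_left)
    then have n: "norm (pr y - pr x) = \<bar>c\<bar>" using e1 by (simp add: norm_eq_sqrt_inner)
    have "norm (y - x)^2 = ((y - x) \<bullet> e)^2 + c^2"
      using dec[of "y - x" "y - x"] by (simp add: power2_norm_eq_inner[symmetric] c_def power2_eq_square)
    also have "\<dots> \<le> (5 * \<bar>c\<bar>)^2 + c^2"
      using power_mono[OF cone[OF that] abs_ge_zero, of 2] by (simp add: c_def)
    also have "\<dots> \<le> (6 * \<bar>c\<bar>)^2" by (simp add: power2_eq_square)
    finally have "norm (y - x) \<le> 6 * \<bar>c\<bar>" by (rule power2_le_imp_le) simp
    then show ?thesis using n by simp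
  qed
  have inj: "inj_on pr U"
  proof (rule inj_onI)
    fix x y assume xy: "x \<in> U" "y \<in> U" "pr x = pr y"
    have "norm (y - x) \<le> 0" using lip[OF xy(1,2)] xy(3) by simp
    then show "x = y" by simp
  qed
  have negP: "negligible (pr ` U)"
  proof (rule negligible_subset[OF negligible_hyperplane[of e 0]])
    show "e \<noteq> 0 \<or> (0::real) \<noteq> 0" using enz by simp
    show "pr ` U \<subseteq> {x. e \<bullet> x = 0}" using orth by (auto simp: pr_def)
  qed
  have UU: "inv_into U pr ` (pr ` U) = U" by (rule inv_into_image_cancel[OF inj]) simp
  have "negligible (inv_into U pr ` (pr ` U))"
  proof (rule negligible_locally_Lipschitz_image)
    show "DIM(pt) \<le> DIM(pt)" by simp
    show "negligible (pr ` U)" by (rule negP)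
    fix q assume q: "q \<in> pr ` U"
    show "\<exists>T B. open T \<and> q \<in> T \<and> (\<forall>y\<in>pr ` U \<inter> T. norm (inv_into U pr y - inv_into U pr q) \<le> B * norm (y - q))"
    proof (intro exI conjI ballI)
      fix y assume "y \<in> pr ` U \<inter> UNIV"
      then obtain b where b: "b \<in> U" "y = pr b" by auto
      obtain a where a: "a \<in> U" "q = pr a" using q by auto
      show "norm (inv_into U pr y - inv_into U pr q) \<le> 6 * norm (y - q)"
        using lip[OF a(1) b(1)] b a inv_into_f_f[OF inj] by simp
    qed auto
  qed
  then show "\<exists>U'. openin (top_of_set (Lpiece K \<alpha> e)) U' \<and> x0 \<in> U' \<and> negligible U'"
    using opU x0U UU by auto
qed


lemma inner2: "(v::pt) \<bullet> u = v$1 * u$1 + v$2 * u$2"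
  by (simp add: inner_vec_def sum_2)

lemma ax1: "(v::pt) \<bullet> axis 1 1 = v$1" by (simp add: inner_axis)
lemma ax2: "(v::pt) \<bullet> axis 2 1 = v$2" by (simp add: inner_axis)

lemma neg_L:
  fixes K :: "pt set"
  assumes "closed K" "K \<noteq> {}" "\<alpha> > 0"
  shows "negligible {x. infdist x K = \<alpha>}"
proof -
  let ?e1 = "axis 1 1 :: pt" and ?e2 = "axis 2 1 :: pt"
  have n1: "?e1 \<noteq> 0" "- ?e1 \<noteq> 0" "?e2 \<noteq> 0" "- ?e2 \<noteq> 0" by (simp_all add: axis_eq_0_iff)
  have o: "?e1 \<bullet> ?e2 = 0" "?e2 \<bullet> ?e1 = 0" by (simp_all add: inner2 axis_def)
  have u: "?e1 \<bullet> ?e1 = 1" "?e2 \<bullet> ?e2 = 1" by (simp_all add: ax1 ax2)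
  have N1: "negligible (Lpiece K \<alpha> ?e1)"
    by (rule neg_piece[where e' = ?e2]) (use assms n1 o u in \<open>simp_all add: ax1 ax2 inner2\<close>)
  have N2: "negligible (Lpiece K \<alpha> (- ?e1))"
    by (rule neg_piece[where e' = ?e2]) (use assms n1 o u in \<open>simp_all add: ax1 ax2 inner2\<close>)
  have N3: "negligible (Lpiece K \<alpha> ?e2)"
    by (rule neg_piece[where e' = ?e1]) (use assms n1 o u in \<open>simp_all add: ax1 ax2 inner2 algebra_simps\<close>)
  have N4: "negligible (Lpiece K \<alpha> (- ?e2))"
    by (rule neg_piece[where e' = ?e1]) (use assms n1 o u in \<open>simp_all add: ax1 ax2 inner2 algebra_simps\<close>)
  have sub: "{x. infdist x K = \<alpha>} \<subseteq> Lpiece K \<alpha> ?e1 \<union> Lpiece K \<alpha> (- ?e1) \<union> Lpiece K \<alpha> ?e2 \<union> Lpiece K \<alpha> (- ?e2)"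
  proof
    fix x assume x: "x \<in> {x. infdist x K = \<alpha>}"
    obtain w where w: "w \<in> K" "infdist x K = dist x w" using infdist_attains_inf[OF assms(1,2)] by blast
    define u where "u = w - x"
    have "u \<bullet> u = \<alpha>^2" using w x by (simp add: u_def dist_norm power2_norm_eq_inner[symmetric] norm_minus_commute)
    then have uu: "(u$1)^2 + (u$2)^2 = \<alpha>^2" by (simp add: inner2 power2_eq_square)
    have "u$1 \<ge> \<alpha>/2 \<or> -(u$1) \<ge> \<alpha>/2 \<or> u$2 \<ge> \<alpha>/2 \<or> -(u$2) \<ge> \<alpha>/2"
    proof (rule ccontr)
      assume "\<not> ?thesis"
      then have a: "\<bar>u$1\<bar> < \<alpha>/2" "\<bar>u$2\<bar> < \<alpha>/2" by auto
      have "(u$1)^2 < (\<alpha>/2)^2" "(u$2)^2 < (\<alpha>/2)^2"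
        using power_strict_mono[OF a(1) abs_ge_zero, of 2] power_strict_mono[OF a(2) abs_ge_zero, of 2] by auto
      then show False using uu assms(3) by (simp add: power_divide) (smt (verit) zero_less_power)
    qed
    then show "x \<in> Lpiece K \<alpha> ?e1 \<union> Lpiece K \<alpha> (- ?e1) \<union> Lpiece K \<alpha> ?e2 \<union> Lpiece K \<alpha> (- ?e2)"
      using x w by (auto simp: Lpiece_def u_def ax1 ax2)
  qed
  show ?thesis
    by (rule negligible_subset[OF _ sub]) (intro negligible_Un N1 N2 N3 N4)
qed


lemma inner_K:
  assumes "x \<in> inner_set \<alpha> S" "y \<in> closure (- S)"
  shows "\<alpha> \<le> dist x y"
proof -
  have ne: "- S \<noteq> {}" using assms(2) by auto
  have "\<alpha> \<le> infdist x (- S)"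
    unfolding infdist_notempty[OF ne]
    by (rule cINF_greatest[OF ne]) (use assms(1) in \<open>auto simp: inner_set_def\<close>)
  also have "\<dots> \<le> dist x y" by (rule closure_infdist_le[OF assms(2)])
  finally show ?thesis .
qed

theorem lemma9:
  fixes M :: "'a measure" and V :: "'a \<Rightarrow> pt set" and S :: "pt set" and \<alpha> :: real
  assumes "poisson_process M V" and "\<alpha> > 0"
  shows "AE \<omega> in M. sealed \<alpha> S (V \<omega>) \<longrightarrow>
           ((\<forall>z\<in>inner_set \<alpha> S. voronoi_map (V \<omega>) z = voronoi_map (V \<omega> \<inter> thicken \<alpha> S) z) \<and>
            (\<forall>x\<in>V \<omega> \<inter> inner_set \<alpha> S.
                voronoi_cell (V \<omega>) x \<subseteq> thicken \<alpha> S \<and>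
                (\<forall>y. delaunay_edge (V \<omega>) x y \<longrightarrow> y \<in> thicken \<alpha> S)))"
proof -
  note pp = assms(1)[unfolded poisson_process_def]
  have ps: "prob_space M" using pp by blast
  have lf: "\<And>\<omega> K. \<omega> \<in> space M \<Longrightarrow> bounded K \<Longrightarrow> finite (V \<omega> \<inter> K)" using pp by blast
  define K where "K = closure (- S)"
  define N where "N = (if K = {} then {} else {x. infdist x K = \<alpha>})"
  have frK: "frontier S \<subseteq> K" by (auto simp: K_def frontier_def closure_complement)
  have Nnull: "N \<in> null_sets lborel"
  proof (cases "K = {}")
    case True then show ?thesis by (simp add: N_def)
  next
    case False
    have neg: "negligible N" using neg_L[of K \<alpha>] False assms(2) by (simp add: N_def K_def)
    have cl: "closed N" using False
      by (simp add: N_def) (intro closed_Collect_eq continuous_on_infdist continuous_on_const continuous_on_id)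
    then have "N \<in> sets borel" by (simp add: borel_closed)
    then show ?thesis using neg
      by (simp add: negligible_iff_null_sets null_sets_completion_iff)
  qed
  define A where "A n = N \<inter> cball 0 (real n)" for n :: nat
  have AE_n: "AE \<omega> in M. card (V \<omega> \<inter> A n) = 0" for n
  proof -
    have Ab: "A n \<in> sets lborel" "bounded (A n)"
      using Nnull by (auto simp: A_def)
    have "A n \<in> null_sets lborel" using Nnull Ab(1) by (auto simp: A_def intro: null_sets_subset)
    then have m0: "measure lborel (A n) = 0" by (simp add: measure_eq_0_null_sets)
    have "measure M {\<omega>\<in>space M. card (V \<omega> \<inter> A n) = 0} = 1"
    proof -
      have "\<forall>k::nat. measure M {\<omega>\<in>space M. card (V \<omega> \<inter> A n) = k} =
            (measure lborel (A n)) ^ k / fact k * exp (- measure lborel (A n))"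
        using pp Ab by blast
      then show ?thesis using m0 by (metis (no_types) power_0 fact_0 div_by_1 mult_1 exp_zero neg_0_equal_iff_equal)
    qed
    then have "AE \<omega> in M. \<omega> \<in> {\<omega>\<in>space M. card (V \<omega> \<inter> A n) = 0}" by (rule prob_space.AE_prob_1[OF ps])
    then show ?thesis by (rule eventually_mono) auto
  qed
  have "AE \<omega> in M. \<forall>n. card (V \<omega> \<inter> A n) = 0" using AE_n by (simp add: AE_all_countable)
  then show ?thesis
  proof (rule AE_mp[OF _ AE_I2], intro impI)
    fix \<omega> assume \<omega>: "\<omega> \<in> space M" and c: "\<forall>n. card (V \<omega> \<inter> A n) = 0" and seal: "sealed \<alpha> S (V \<omega>)"
    have lf': "\<And>K. bounded K \<Longrightarrow> finite (V \<omega> \<inter> K)" using lf[OF \<omega>] .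
    have empty: "V \<omega> \<inter> N = {}"
    proof (rule ccontr)
      assume "V \<omega> \<inter> N \<noteq> {}"
      then obtain x where x: "x \<in> V \<omega>" "x \<in> N" by auto
      obtain n :: nat where "norm x \<le> real n" using real_arch_simple by blast
      then have "x \<in> V \<omega> \<inter> A n" using x by (simp add: A_def)
      moreover have "finite (V \<omega> \<inter> A n)" using lf'[of "A n"] by (simp add: A_def bounded_Int)
      ultimately show False using c by (metis card_0_eq empty_iff)
    qed
    have nd: "\<forall>x\<in>V \<omega>. x \<in> inner_set \<alpha> S \<longrightarrow> (\<forall>w\<in>frontier S. dist x w \<noteq> \<alpha>)"
    proof (intro ballI impI notI)
      fix x w assume x: "x \<in> V \<omega>" "x \<in> inner_set \<alpha> S" and w: "w \<in> frontier S" "dist x w = \<alpha>"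
      have wK: "w \<in> K" using w frK by auto
      then have Kne: "K \<noteq> {}" by auto
      have "infdist x K \<le> \<alpha>" using infdist_le[OF wK, of x] w by simp
      moreover have "\<alpha> \<le> infdist x K"
        unfolding infdist_notempty[OF Kne]
        by (rule cINF_greatest[OF Kne]) (use inner_K[OF x(2)] in \<open>auto simp: K_def\<close>)
      ultimately have "x \<in> N" using Kne by (simp add: N_def)
      then show False using empty x by auto
    qed
    show "(\<forall>z\<in>inner_set \<alpha> S. voronoi_map (V \<omega>) z = voronoi_map (V \<omega> \<inter> thicken \<alpha> S) z) \<and>
            (\<forall>x\<in>V \<omega> \<inter> inner_set \<alpha> S.
                voronoi_cell (V \<omega>) x \<subseteq> thicken \<alpha> S \<and>
                (\<forall>y. delaunay_edge (V \<omega>) x y \<longrightarrow> y \<in> thicken \<alpha> S))"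
      by (rule determ[OF lf' seal assms(2) nd])
  qed
qed

end
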